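(* Let $n\in\mathbb N$. (a) If $a_{\mathbf P}:(0,\infty)\to\mathbb R$, $\mathbf P\in\mathbf{Part}(n)$, are functions such that $\sum_{\mathbf P\in\mathbf{Part}(n)}a_{\mathbf P}(\|\mu\|)(\tau^{\mathbf P}_I)_\mu=0$ for all finite sets $I$ and all $\mu\in\mathcal M_+(I)$, then $a_{\mathbf P}\equiv0$ for all $\mathbf P$. (b) If $c_{\mathbf P}\in\mathbb R$, for $\mathbf P=\{P_1,\dots,P_l\}\in\mathbf{Part}(n)$ with $|P_i|\ge2$ for all $i$, are constants such that $\sum_{\mathbf P}c_{\mathbf P}\tau^{\mathbf P}_I=0$ when restricted to $\mathcal P_+(I)$ (i.e. at points of $\mathcal P_+(I)$ and on tangent vectors in $\mathcal S_0(I)$) for all finite sets $I$, then $c_{\mathbf P}=0$ for all $\mathbf P$. In other words, the functions $a_{\mathbf P}$ and the constants $c_{\mathbf P}$ in such representations are uniquely determined.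
   Context: $\mathbf{Part}(n)$ is the set of partitions of $\{1,\dots,n\}$. For a finite set $I$: $\mathcal S(I)=\{\sum_{i\in I}x_i\delta_i\}$, $\|\sum x_i\delta_i\|=\sum|x_i|$, $\mathcal M_+(I)=\{\sum\mu_i\delta_i:\mu_i>0\}$, $\mathcal P_+(I)=\{\mu\in\mathcal M_+(I):\sum\mu_i=1\}$, $\mathcal S_0(I)=\{\sum x_i\delta_i:\sum x_i=0\}$. For $\mu=\sum\mu_i\delta_i\in\mathcal M_+(I)$ and $V_k=\sum_iV^i_k\delta_i\in\mathcal S(I)$, $(\tau^m_I)_\mu(V_1,\dots,V_m)=\sum_i\mu_i^{1-m}V_1^i\cdots V_m^i$, and for $\mathbf P=\{P_1,\dots,P_l\}\in\mathbf{Part}(n)$, $(\tau^{\mathbf P}_I)_\mu(V_1,\dots,V_n)=\prod_{i=1}^l(\tau^{|P_i|}_I)_\mu((V_j)_{j\in P_i})$. *)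

theory Defs
  imports Complex_Main "HOL-Library.Disjoint_Sets"
begin

definition Part :: "nat \<Rightarrow> nat set set set" where
  "Part n = {P. partition_on {1..n} P}"

text \<open>Elements of S(I) are modelled as functions nat => real (only values on I matter);
  a family V_1,...,V_n is V :: nat => nat => real, with V k i the i-th coordinate of V_k.\<close>

definition snorm :: "nat set \<Rightarrow> (nat \<Rightarrow> real) \<Rightarrow> real" where
  "snorm I x = (\<Sum>i\<in>I. \<bar>x i\<bar>)"

text \<open>(tau^m_I)_mu applied to the vectors (V_j)_{j in B}, where m = |B|.\<close>
definition tau_block :: "nat set \<Rightarrow> (nat \<Rightarrow> real) \<Rightarrow> (nat \<Rightarrow> nat \<Rightarrow> real) \<Rightarrow> nat set \<Rightarrow> real" where
  "tau_block I \<mu> V B = (\<Sum>i\<in>I. \<mu> i powr (1 - real (card B)) * (\<Prod>j\<in>B. V j i))"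

definition tau_part :: "nat set \<Rightarrow> (nat \<Rightarrow> real) \<Rightarrow> nat set set \<Rightarrow> (nat \<Rightarrow> nat \<Rightarrow> real) \<Rightarrow> real" where
  "tau_part I \<mu> P V = (\<Prod>B\<in>P. tau_block I \<mu> V B)"

end

theory Submission
  imports Defs
begin


lemma uniq_abs:
  fixes c :: "'a \<Rightarrow> real" and r :: "'a \<Rightarrow> 'a \<Rightarrow> bool"
  assumes fin: "finite S"
    and tr: "\<And>x y z. x\<in>S \<Longrightarrow> y\<in>S \<Longrightarrow> z\<in>S \<Longrightarrow> r x y \<Longrightarrow> r y z \<Longrightarrow> r x z"
    and asy: "\<And>x y. x\<in>S \<Longrightarrow> y\<in>S \<Longrightarrow> r x y \<Longrightarrow> r y x \<Longrightarrow> x = y"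
    and rfl: "\<And>x. x\<in>S \<Longrightarrow> r x x"
    and key: "\<And>P0. P0\<in>S \<Longrightarrow> \<exists>w. w P0 \<noteq> 0 \<and> (\<Sum>P\<in>S. c P * (if r P P0 then w P else 0)) = 0"
  shows "\<forall>P\<in>S. c P = 0"
proof -
  define R where "R = {(x,y). x\<in>S \<and> y\<in>S \<and> r x y \<and> x \<noteq> y}"
  have "R \<subseteq> S \<times> S" unfolding R_def by auto
  then have "finite R" using fin finite_subset by blast
  moreover have "trans R" unfolding R_def trans_def using tr asy by blast
  moreover have "irrefl R" unfolding R_def irrefl_def by blast
  ultimately have wfR: "wf R" by (metis acyclic_irrefl trancl_id finite_acyclic_wf)
  have "\<forall>P. P\<in>S \<longrightarrow> c P = 0"
  proof (rule allI, rule wf_induct[OF wfR], intro impI)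
    fix P0 assume IH: "\<forall>y. (y, P0) \<in> R \<longrightarrow> y \<in> S \<longrightarrow> c y = 0" and P0: "P0 \<in> S"
    obtain w where w0: "w P0 \<noteq> 0" and ws: "(\<Sum>P\<in>S. c P * (if r P P0 then w P else 0)) = 0"
      using key[OF P0] by blast
    have "(\<Sum>P\<in>S. c P * (if r P P0 then w P else 0)) = (\<Sum>P\<in>S. if P = P0 then c P0 * w P0 else 0)"
    proof (rule sum.cong[OF refl])
      fix P assume P: "P \<in> S"
      show "c P * (if r P P0 then w P else 0) = (if P = P0 then c P0 * w P0 else 0)"
      proof (cases "P = P0")
        case True then show ?thesis using rfl P by simp
      next
        case False
        show ?thesis
        proof (cases "r P P0")
          case True
          then have "(P, P0) \<in> R" using True False P P0 unfolding R_def by blast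
          then show ?thesis using IH P False by simp
        qed (use False in simp)
      qed
    qed
    then show "c P0 = 0" using ws w0 P0 by (simp add: fin)
  qed
  then show ?thesis by blast
qed


definition refines :: "nat set set \<Rightarrow> nat set set \<Rightarrow> bool" where
  "refines P Q = (\<forall>C\<in>P. \<exists>B\<in>Q. C \<subseteq> B)"
definition Ic :: "nat set set \<Rightarrow> nat set" where
  "Ic P0 = insert 0 ((\<lambda>B. 2 * Min B) ` P0 \<union> (\<lambda>B. 2 * Min B + 1) ` P0)"
definition muc :: "real \<Rightarrow> real \<Rightarrow> real \<Rightarrow> nat \<Rightarrow> real" where
  "muc \<alpha> \<beta> \<gamma> i = (if i = 0 then \<gamma> else if even i then \<alpha> else \<beta>)"
definition Vc :: "nat set set \<Rightarrow> real \<Rightarrow> nat \<Rightarrow> nat \<Rightarrow> real" where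
  "Vc P0 s j i = (if \<exists>B\<in>P0. j \<in> B \<and> i = 2 * Min B then 1
     else if \<exists>B\<in>P0. j \<in> B \<and> i = 2 * Min B + 1 then - s else 0)"
definition gg :: "real \<Rightarrow> real \<Rightarrow> real \<Rightarrow> nat \<Rightarrow> real" where
  "gg \<alpha> \<beta> s k = \<alpha> powr (1 - real k) + (- s) ^ k * \<beta> powr (1 - real k)"

lemma part_props:
  assumes "P0 \<in> Part n"
  shows "finite P0" "\<And>B. B \<in> P0 \<Longrightarrow> finite B \<and> B \<noteq> {} \<and> B \<subseteq> {1..n}"
    "\<And>B B'. B \<in> P0 \<Longrightarrow> B' \<in> P0 \<Longrightarrow> B \<noteq> B' \<Longrightarrow> B \<inter> B' = {}"
    "\<Union>P0 = {1..n}"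
proof -
  have p: "partition_on {1..n} P0" using assms by (simp add: Part_def)
  show "finite P0" using finite_elements[OF _ p] by simp
  show "\<And>B. B \<in> P0 \<Longrightarrow> finite B \<and> B \<noteq> {} \<and> B \<subseteq> {1..n}"
  proof -
    fix B assume B: "B \<in> P0"
    have s: "B \<subseteq> {1..n}" using p B unfolding partition_on_def by blast
    have "B \<noteq> {}" using p B unfolding partition_on_def by blast
    then show "finite B \<and> B \<noteq> {} \<and> B \<subseteq> {1..n}" using s finite_subset by blast
  qed
  show "\<And>B B'. B \<in> P0 \<Longrightarrow> B' \<in> P0 \<Longrightarrow> B \<noteq> B' \<Longrightarrow> B \<inter> B' = {}"
    using p unfolding partition_on_def by (meson disjointD)
  show "\<Union>P0 = {1..n}" using p unfolding partition_on_def by blast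
qed

lemma Min_props:
  assumes "P0 \<in> Part n" "B \<in> P0"
  shows "Min B \<in> B" "Min B \<ge> 1"
  using part_props(2)[OF assms] by auto

lemma Min_inj:
  assumes "P0 \<in> Part n" "B \<in> P0" "B' \<in> P0" "Min B = Min B'"
  shows "B = B'"
proof (rule ccontr)
  assume "B \<noteq> B'"
  then have "B \<inter> B' = {}" using part_props(3)[OF assms(1-3)] by blast
  moreover have "Min B \<in> B \<inter> B'" using Min_props(1)[OF assms(1,2)] Min_props(1)[OF assms(1,3)] assms(4) by simp
  ultimately show False by blast
qed

lemma inj_Min: "P0 \<in> Part n \<Longrightarrow> inj_on Min P0"
  by (meson Min_inj inj_onI)

lemma sum_I:
  assumes "P0 \<in> Part n"
  shows "(\<Sum>i\<in>Ic P0. F i) = F 0 + (\<Sum>B\<in>P0. F (2 * Min B)) + (\<Sum>B\<in>P0. F (2 * Min B + 1))"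
proof -
  have fin: "finite P0" using part_props(1)[OF assms] .
  have i1: "inj_on (\<lambda>B. 2 * Min B) P0" using inj_Min[OF assms] unfolding inj_on_def by auto
  have i2: "inj_on (\<lambda>B. 2 * Min B + 1) P0" using inj_Min[OF assms] unfolding inj_on_def by auto
  have z: "0 \<notin> (\<lambda>B. 2 * Min B) ` P0 \<union> (\<lambda>B. 2 * Min B + 1) ` P0"
  proof
    assume "0 \<in> (\<lambda>B. 2 * Min B) ` P0 \<union> (\<lambda>B. 2 * Min B + 1) ` P0"
    then obtain B where "B \<in> P0" "0 = 2 * Min B \<or> 0 = 2 * Min B + 1" by blast
    then show False using Min_props(2)[OF assms \<open>B \<in> P0\<close>] by linarith
  qed
  have d: "(\<lambda>B. 2 * Min B) ` P0 \<inter> (\<lambda>B. 2 * Min B + 1) ` P0 = {}"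
  proof (rule ccontr)
    assume "(\<lambda>B. 2 * Min B) ` P0 \<inter> (\<lambda>B. 2 * Min B + 1) ` P0 \<noteq> {}"
    then obtain B B' :: "nat set" where "2 * Min B = 2 * Min B' + 1" by blast
    then show False by presburger
  qed
  have s1: "sum F ((\<lambda>B. 2 * Min B) ` P0) = (\<Sum>B\<in>P0. F (2 * Min B))"
    using sum.reindex[OF i1] by (simp add: comp_def)
  have s2: "sum F ((\<lambda>B. 2 * Min B + 1) ` P0) = (\<Sum>B\<in>P0. F (2 * Min B + 1))"
    using sum.reindex[OF i2, of F] by (simp add: comp_def)
  have "sum F (Ic P0) = F 0 + sum F ((\<lambda>B. 2 * Min B) ` P0 \<union> (\<lambda>B. 2 * Min B + 1) ` P0)"
    unfolding Ic_def by (rule sum.insert) (use fin z in auto)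
  also have "sum F ((\<lambda>B. 2 * Min B) ` P0 \<union> (\<lambda>B. 2 * Min B + 1) ` P0)
     = sum F ((\<lambda>B. 2 * Min B) ` P0) + sum F ((\<lambda>B. 2 * Min B + 1) ` P0)"
    by (rule sum.union_disjoint) (use fin d in auto)
  finally show ?thesis using s1 s2 by (simp add: add.assoc)
qed

lemma fin_I: "P0 \<in> Part n \<Longrightarrow> finite (Ic P0)"
  using part_props(1) unfolding Ic_def by auto

lemma Vc_vals:
  assumes "P0 \<in> Part n" "B \<in> P0"
  shows "Vc P0 s j (2 * Min B) = (if j \<in> B then 1 else 0)"
    "Vc P0 s j (2 * Min B + 1) = (if j \<in> B then - s else 0)"
proof -
  have c1: "(\<exists>B'\<in>P0. j \<in> B' \<and> 2 * Min B = 2 * Min B') \<longleftrightarrow> j \<in> B"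
  proof
    assume "\<exists>B'\<in>P0. j \<in> B' \<and> 2 * Min B = 2 * Min B'"
    then obtain B' where "B' \<in> P0" "j \<in> B'" "Min B = Min B'" by auto
    then show "j \<in> B" using Min_inj[OF assms(1) assms(2)] by metis
  next
    assume "j \<in> B" then show "\<exists>B'\<in>P0. j \<in> B' \<and> 2 * Min B = 2 * Min B'" using assms(2) by blast
  qed
  have c1': "(\<exists>B'\<in>P0. j \<in> B' \<and> 2 * Min B + 1 = 2 * Min B' + 1) \<longleftrightarrow> j \<in> B"
  proof
    assume "\<exists>B'\<in>P0. j \<in> B' \<and> 2 * Min B + 1 = 2 * Min B' + 1"
    then obtain B' where "B' \<in> P0" "j \<in> B'" "Min B = Min B'" by auto
    then show "j \<in> B" using Min_inj[OF assms(1) assms(2)] by metis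
  next
    assume "j \<in> B" then show "\<exists>B'\<in>P0. j \<in> B' \<and> 2 * Min B + 1 = 2 * Min B' + 1" using assms(2) by blast
  qed
  have o: "\<And>B' :: nat set. 2 * Min B \<noteq> 2 * Min B' + 1" by presburger
  have o2: "\<And>B' :: nat set. 2 * Min B + 1 \<noteq> 2 * Min B'" by presburger
  have c2: "\<not> (\<exists>B'\<in>P0. j \<in> B' \<and> 2 * Min B = 2 * Min B' + 1)" using o by blast
  have c2': "\<not> (\<exists>B'\<in>P0. j \<in> B' \<and> 2 * Min B + 1 = 2 * Min B')" using o2 by blast
  show "Vc P0 s j (2 * Min B) = (if j \<in> B then 1 else 0)"
    unfolding Vc_def c1 by (simp only: c2 if_False)
  show "Vc P0 s j (2 * Min B + 1) = (if j \<in> B then - s else 0)"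
    unfolding Vc_def c1' by (simp only: c2' if_False)
qed

lemma Vc_zero:
  assumes "P0 \<in> Part n"
  shows "Vc P0 s j 0 = 0"
proof -
  have "\<not> (\<exists>B\<in>P0. j \<in> B \<and> 0 = 2 * Min B) \<and> \<not> (\<exists>B\<in>P0. j \<in> B \<and> (0::nat) = 2 * Min B + 1)"
  proof (rule ccontr)
    assume "\<not> ?thesis"
    then obtain B where "B \<in> P0" "(0::nat) = 2 * Min B \<or> 0 = 2 * Min B + 1" by blast
    then show False using Min_props(2)[OF assms \<open>B \<in> P0\<close>] by linarith
  qed
  then show ?thesis unfolding Vc_def by simp
qed

lemma muc_vals:
  assumes "P0 \<in> Part n" "B \<in> P0"
  shows "muc \<alpha> \<beta> \<gamma> 0 = \<gamma>" "muc \<alpha> \<beta> \<gamma> (2 * Min B) = \<alpha>" "muc \<alpha> \<beta> \<gamma> (2 * Min B + 1) = \<beta>"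
proof -
  have m: "Min B \<ge> 1" using Min_props(2)[OF assms] .
  show "muc \<alpha> \<beta> \<gamma> 0 = \<gamma>" unfolding muc_def by simp
  show "muc \<alpha> \<beta> \<gamma> (2 * Min B) = \<alpha>" unfolding muc_def using m by simp
  show "muc \<alpha> \<beta> \<gamma> (2 * Min B + 1) = \<beta>" unfolding muc_def by simp
qed

lemma prod_ind:
  assumes "finite C"
  shows "(\<Prod>j\<in>C. (if j \<in> B then x else 0)) = (if C \<subseteq> B then x ^ card C else (0::real))"
proof (cases "C \<subseteq> B")
  case True
  then have "(\<Prod>j\<in>C. (if j \<in> B then x else 0)) = (\<Prod>j\<in>C. x)" by (intro prod.cong) auto
  then show ?thesis using True by simp
next
  case False
  then obtain j where "j \<in> C" "j \<notin> B" by blast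
  then show ?thesis using False assms by (simp add: prod_zero_iff) blast
qed

lemma tau_block_c:
  assumes P0: "P0 \<in> Part n" and C: "finite C" "C \<noteq> {}"
  shows "tau_block (Ic P0) (muc \<alpha> \<beta> \<gamma>) (Vc P0 s) C
     = (if \<exists>B\<in>P0. C \<subseteq> B then gg \<alpha> \<beta> s (card C) else 0)"
proof -
  have z: "(\<Prod>j\<in>C. Vc P0 s j 0) = 0" using Vc_zero[OF P0] C by (simp add: prod_zero_iff card_gt_0_iff)
  have "tau_block (Ic P0) (muc \<alpha> \<beta> \<gamma>) (Vc P0 s) C
     = (\<Sum>B\<in>P0. (if C \<subseteq> B then gg \<alpha> \<beta> s (card C) else 0))"
  proof -
    have eq: "muc \<alpha> \<beta> \<gamma> (2 * Min B) powr (1 - real (card C)) * (\<Prod>j\<in>C. Vc P0 s j (2 * Min B))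
       + muc \<alpha> \<beta> \<gamma> (2 * Min B + 1) powr (1 - real (card C)) * (\<Prod>j\<in>C. Vc P0 s j (2 * Min B + 1))
       = (if C \<subseteq> B then gg \<alpha> \<beta> s (card C) else 0)" if B: "B \<in> P0" for B
      unfolding muc_vals[OF P0 B] Vc_vals[OF P0 B] prod_ind[OF C(1)] gg_def
      by (simp add: mult.commute)
    show ?thesis
      unfolding tau_block_def sum_I[OF P0] z
      by (simp only: mult_zero_right add_0_left sum.distrib[symmetric]) (rule sum.cong[OF refl], rule eq)
  qed
  also have "\<dots> = (if \<exists>B\<in>P0. C \<subseteq> B then gg \<alpha> \<beta> s (card C) else 0)"
  proof (cases "\<exists>B\<in>P0. C \<subseteq> B")
    case True
    then obtain B where B: "B \<in> P0" "C \<subseteq> B" by blast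
    have "(\<Sum>B'\<in>P0. (if C \<subseteq> B' then gg \<alpha> \<beta> s (card C) else 0)) 
        = (\<Sum>B'\<in>P0. (if B' = B then gg \<alpha> \<beta> s (card C) else 0))"
    proof (rule sum.cong[OF refl])
      fix B' assume "B' \<in> P0"
      then show "(if C \<subseteq> B' then gg \<alpha> \<beta> s (card C) else 0) = (if B' = B then gg \<alpha> \<beta> s (card C) else 0)"
        using part_props(3)[OF P0 B(1), of B'] B C(2) by auto
    qed
    then show ?thesis using True B part_props(1)[OF P0] by simp
  qed simp
  finally show ?thesis .
qed



lemma tau_part_c:
  assumes P0: "P0 \<in> Part n" and P: "P \<in> Part n"
  shows "tau_part (Ic P0) (muc \<alpha> \<beta> \<gamma>) P (Vc P0 s)
     = (if refines P P0 then (\<Prod>C\<in>P. gg \<alpha> \<beta> s (card C)) else 0)"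
proof -
  have "tau_part (Ic P0) (muc \<alpha> \<beta> \<gamma>) P (Vc P0 s)
      = (\<Prod>C\<in>P. (if \<exists>B\<in>P0. C \<subseteq> B then gg \<alpha> \<beta> s (card C) else 0))"
    unfolding tau_part_def
  proof (rule prod.cong[OF refl])
    fix C assume "C \<in> P"
    then have "finite C" "C \<noteq> {}" using part_props(2)[OF P] by auto
    then show "tau_block (Ic P0) (muc \<alpha> \<beta> \<gamma>) (Vc P0 s) C
       = (if \<exists>B\<in>P0. C \<subseteq> B then gg \<alpha> \<beta> s (card C) else 0)"
      using tau_block_c[OF P0] by blast
  qed
  also have "\<dots> = (if refines P P0 then (\<Prod>C\<in>P. gg \<alpha> \<beta> s (card C)) else 0)"
  proof (cases "refines P P0")
    case True
    then have h: "\<And>C. C \<in> P \<Longrightarrow> \<exists>B\<in>P0. C \<subseteq> B" unfolding refines_def by blast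
    have "(\<Prod>C\<in>P. (if \<exists>B\<in>P0. C \<subseteq> B then gg \<alpha> \<beta> s (card C) else 0)) = (\<Prod>C\<in>P. gg \<alpha> \<beta> s (card C))"
      by (rule prod.cong[OF refl]) (simp only: h if_True)
    then show ?thesis using True by (simp only: if_True)
  next
    case False
    then obtain C where "C \<in> P" "\<not> (\<exists>B\<in>P0. C \<subseteq> B)" unfolding refines_def by blast
    then have "(\<Prod>C\<in>P. (if \<exists>B\<in>P0. C \<subseteq> B then gg \<alpha> \<beta> s (card C) else 0)) = 0"
      by (intro prod_zero part_props(1)[OF P]) (rule bexI[of _ C], simp_all)
    then show ?thesis using False by (simp only: if_False)
  qed
  finally show ?thesis .
qed

lemma refines_trans: "refines x y \<Longrightarrow> refines y z \<Longrightarrow> refines x z"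
  unfolding refines_def by (meson subset_trans)

lemma refines_refl: "refines x x"
  unfolding refines_def by blast

lemma refines_sub:
  assumes P: "P \<in> Part n" and Q: "Q \<in> Part n" and "refines P Q" "refines Q P"
  shows "P \<subseteq> Q"
proof
  fix C assume C: "C \<in> P"
  then obtain B where B: "B \<in> Q" "C \<subseteq> B" using assms(3) unfolding refines_def by blast
  then obtain C' where C': "C' \<in> P" "B \<subseteq> C'" using assms(4) unfolding refines_def by blast
  have "C \<noteq> {}" using part_props(2)[OF P C] by blast
  then have "C \<inter> C' \<noteq> {}" using B C' by blast
  then have "C = C'" using part_props(3)[OF P C C'(1)] by blast
  then have "C = B" using B C' by blast
  then show "C \<in> Q" using B by simp
qed

lemma refines_antisym:
  "P \<in> Part n \<Longrightarrow> Q \<in> Part n \<Longrightarrow> refines P Q \<Longrightarrow> refines Q P \<Longrightarrow> P = Q"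
  by (rule subset_antisym; rule refines_sub) assumption+

lemma finite_Part: "finite (Part n)"
  unfolding Part_def by (rule finitely_many_partition_on) simp

lemma card_blocks: "P \<in> Part n \<Longrightarrow> C \<in> P \<Longrightarrow> card C \<ge> 1"
proof -
  assume a: "P \<in> Part n" "C \<in> P"
  have "finite C" "C \<noteq> {}" using part_props(2)[OF a] by auto
  then have "card C > 0" by (simp add: card_gt_0_iff)
  then show "card C \<ge> 1" by simp
qed



lemma part_a:
  fixes a :: "nat set set \<Rightarrow> real \<Rightarrow> real"
  assumes H: "\<forall>(I :: nat set) (\<mu> :: nat \<Rightarrow> real) (V :: nat \<Rightarrow> nat \<Rightarrow> real).
         finite I \<longrightarrow> I \<noteq> {} \<longrightarrow> (\<forall>i\<in>I. 0 < \<mu> i) \<longrightarrow>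
         (\<Sum>P\<in>Part n. a P (snorm I \<mu>) * tau_part I \<mu> P V) = 0"
  shows "\<forall>P\<in>Part n. \<forall>t>0. a P t = 0"
proof (intro ballI allI impI)
  fix P :: "nat set set" and t :: real assume P: "P \<in> Part n" and t: "0 < t"
  have "\<forall>P\<in>Part n. a P t = 0"
  proof (rule uniq_abs[where r = refines])
    show "finite (Part n)" by (rule finite_Part)
    show "\<And>x y z. refines x y \<Longrightarrow> refines y z \<Longrightarrow> refines x z" by (rule refines_trans)
    show "\<And>x y. x \<in> Part n \<Longrightarrow> y \<in> Part n \<Longrightarrow> refines x y \<Longrightarrow> refines y x \<Longrightarrow> x = y"
      by (rule refines_antisym)
    show "\<And>x. refines x x" by (rule refines_refl)
  next
    fix P0 assume P0: "P0 \<in> Part n"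
    define N where "N = card P0"
    define \<alpha> where "\<alpha> = t / (2 * real N + 1)"
    have ap: "\<alpha> > 0" unfolding \<alpha>_def using t by simp
    have mu: "\<And>i. muc \<alpha> \<alpha> \<alpha> i = \<alpha>" by (simp add: muc_def)
    have sn: "snorm (Ic P0) (muc \<alpha> \<alpha> \<alpha>) = t"
    proof -
      have "snorm (Ic P0) (muc \<alpha> \<alpha> \<alpha>) = \<alpha> + real N * \<alpha> + real N * \<alpha>"
        unfolding snorm_def sum_I[OF P0] mu using ap by (simp add: N_def)
      also have "\<dots> = \<alpha> * (2 * real N + 1)" by (simp add: algebra_simps)
      also have "\<dots> = t" unfolding \<alpha>_def by (simp add: field_simps add_pos_nonneg)
      finally show ?thesis .
    qed
    have fin: "finite (Ic P0)" by (rule fin_I[OF P0])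
    have ne: "Ic P0 \<noteq> {}" unfolding Ic_def by simp
    have pos: "\<forall>i\<in>Ic P0. 0 < muc \<alpha> \<alpha> \<alpha> i" using ap mu by simp
    define w where "w = (\<lambda>P :: nat set set. \<Prod>C\<in>P. gg \<alpha> \<alpha> 0 (card C))"
    have "(\<Sum>P\<in>Part n. a P t * tau_part (Ic P0) (muc \<alpha> \<alpha> \<alpha>) P (Vc P0 0)) = 0"
      using H fin ne pos sn by metis
    also have "(\<Sum>P\<in>Part n. a P t * tau_part (Ic P0) (muc \<alpha> \<alpha> \<alpha>) P (Vc P0 0))
       = (\<Sum>P\<in>Part n. a P t * (if refines P P0 then w P else 0))"
      unfolding w_def by (rule sum.cong[OF refl]) (simp only: tau_part_c[OF P0])
    finally have s0: "(\<Sum>P\<in>Part n. a P t * (if refines P P0 then w P else 0)) = 0" .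
    have "w P0 \<noteq> 0"
    proof -
      have "gg \<alpha> \<alpha> 0 (card C) \<noteq> 0" if C: "C \<in> P0" for C
      proof -
        have "card C \<ge> 1" by (rule card_blocks[OF P0 C])
        then have z: "(0::real) ^ card C = 0" by simp
        show ?thesis unfolding gg_def minus_zero z using ap by simp
      qed
      then show ?thesis unfolding w_def using part_props(1)[OF P0] by (simp add: prod_zero_iff)
    qed
    then show "\<exists>w. w P0 \<noteq> 0 \<and> (\<Sum>P\<in>Part n. a P t * (if refines P P0 then w P else 0)) = 0"
      using s0 by blast
  qed
  then show "a P t = 0" using P by blast
qed



lemma gg_nz:
  assumes "0 < \<alpha>" "\<alpha> < \<beta>" "2 \<le> k"
  shows "gg \<alpha> \<beta> 1 k \<noteq> 0"
proof (cases "even k")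
  case True
  then have "(-1::real) ^ k = 1" by simp
  then have "gg \<alpha> \<beta> 1 k = \<alpha> powr (1 - real k) + \<beta> powr (1 - real k)" unfolding gg_def by simp
  moreover have "\<alpha> powr (1 - real k) > 0" "\<beta> powr (1 - real k) > 0" using assms by auto
  ultimately show ?thesis by linarith
next
  case False
  then have "(-1::real) ^ k = -1" by simp
  then have "gg \<alpha> \<beta> 1 k = \<alpha> powr (1 - real k) - \<beta> powr (1 - real k)" unfolding gg_def by simp
  moreover have "\<beta> powr (1 - real k) < \<alpha> powr (1 - real k)"
    by (rule powr_less_mono2_neg) (use assms in auto)
  ultimately show ?thesis by linarith
qed

lemma part_b:
  fixes c :: "nat set set \<Rightarrow> real"
  assumes H: "\<forall>(I :: nat set) (\<mu> :: nat \<Rightarrow> real) (V :: nat \<Rightarrow> nat \<Rightarrow> real).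
         finite I \<longrightarrow> (\<forall>i\<in>I. 0 < \<mu> i) \<longrightarrow> (\<Sum>i\<in>I. \<mu> i) = 1 \<longrightarrow>
         (\<forall>k\<in>{1..n}. (\<Sum>i\<in>I. V k i) = 0) \<longrightarrow>
         (\<Sum>P\<in>{P\<in>Part n. \<forall>B\<in>P. 2 \<le> card B}. c P * tau_part I \<mu> P V) = 0"
  shows "\<forall>P\<in>{P\<in>Part n. \<forall>B\<in>P. 2 \<le> card B}. c P = 0"
proof (rule uniq_abs[where r = refines])
  show "finite {P\<in>Part n. \<forall>B\<in>P. 2 \<le> card B}" using finite_Part by simp
  show "\<And>x y z. refines x y \<Longrightarrow> refines y z \<Longrightarrow> refines x z" by (rule refines_trans)
  show "\<And>x y. x \<in> {P\<in>Part n. \<forall>B\<in>P. 2 \<le> card B} \<Longrightarrow> y \<in> {P\<in>Part n. \<forall>B\<in>P. 2 \<le> card B}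
      \<Longrightarrow> refines x y \<Longrightarrow> refines y x \<Longrightarrow> x = y"
    using refines_antisym by blast
  show "\<And>x. refines x x" by (rule refines_refl)
next
  fix P0 assume P0S: "P0 \<in> {P\<in>Part n. \<forall>B\<in>P. 2 \<le> card B}"
  then have P0: "P0 \<in> Part n" and big: "\<And>B. B \<in> P0 \<Longrightarrow> 2 \<le> card B" by auto
  define N where "N = card P0"
  define \<alpha> where "\<alpha> = 1 / (3 * (real N + 1))"
  define \<beta> where "\<beta> = 2 / (3 * (real N + 1))"
  define \<gamma> where "\<gamma> = 3 / (3 * (real N + 1))"
  have Dp0: "3 * (real N + 1) > 0" by simp
  have ap: "\<alpha> > 0" "\<beta> > 0" "\<gamma> > 0" "\<alpha> < \<beta>" unfolding \<alpha>_def \<beta>_def \<gamma>_def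
    using Dp0 divide_pos_pos divide_strict_right_mono[of 1 2 "3 * (real N + 1)"] by auto
  have fin: "finite (Ic P0)" by (rule fin_I[OF P0])
  have pos: "\<forall>i\<in>Ic P0. 0 < muc \<alpha> \<beta> \<gamma> i" using ap by (simp add: muc_def)
  have s1: "(\<Sum>i\<in>Ic P0. muc \<alpha> \<beta> \<gamma> i) = 1"
  proof -
    have e1: "(\<Sum>B\<in>P0. muc \<alpha> \<beta> \<gamma> (2 * Min B)) = (\<Sum>B\<in>P0. \<alpha>)"
      by (rule sum.cong[OF refl]) (rule muc_vals(2)[OF P0])
    have e2: "(\<Sum>B\<in>P0. muc \<alpha> \<beta> \<gamma> (2 * Min B + 1)) = (\<Sum>B\<in>P0. \<beta>)"
      by (rule sum.cong[OF refl]) (rule muc_vals(3)[OF P0])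
    have "(\<Sum>i\<in>Ic P0. muc \<alpha> \<beta> \<gamma> i) = \<gamma> + real N * \<alpha> + real N * \<beta>"
      unfolding sum_I[OF P0] e1 e2 by (simp add: N_def muc_def)
    also have "\<dots> = 1"
    proof -
      define D where "D = 3 * (real N + 1)"
      have Dp: "D > 0" unfolding D_def by simp
      have a1: "\<alpha> * D = 1" "\<beta> * D = 2" "\<gamma> * D = 3"
        unfolding \<alpha>_def \<beta>_def \<gamma>_def D_def[symmetric] using Dp by simp_all
      have "(\<gamma> + real N * \<alpha> + real N * \<beta>) * D = \<gamma> * D + real N * (\<alpha> * D) + real N * (\<beta> * D)"
        by (simp only: distrib_right mult.assoc)
      also have "\<dots> = 3 + real N * 1 + real N * 2" by (simp only: a1)
      also have "\<dots> = D" unfolding D_def by simp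
      finally show ?thesis using Dp by simp
    qed
    finally show ?thesis .
  qed
  have tg: "\<forall>k\<in>{1..n}. (\<Sum>i\<in>Ic P0. Vc P0 1 k i) = 0"
  proof
    fix k :: nat
    have e1: "(\<Sum>B\<in>P0. Vc P0 1 k (2 * Min B)) = (\<Sum>B\<in>P0. (if k \<in> B then 1 else 0))"
      by (rule sum.cong[OF refl]) (rule Vc_vals(1)[OF P0])
    have e2: "(\<Sum>B\<in>P0. Vc P0 1 k (2 * Min B + 1)) = (\<Sum>B\<in>P0. (if k \<in> B then -1 else 0))"
      by (rule sum.cong[OF refl]) (rule Vc_vals(2)[OF P0])
    have e3: "(\<Sum>B\<in>P0. (if k \<in> B then 1 else 0)) + (\<Sum>B\<in>P0. (if k \<in> B then -1 else 0)) = (0::real)"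
      by (simp only: sum.distrib[symmetric]) (rule sum.neutral, simp)
    show "(\<Sum>i\<in>Ic P0. Vc P0 1 k i) = 0"
      unfolding sum_I[OF P0] e1 e2 Vc_zero[OF P0] using e3 by simp
  qed
  define w where "w = (\<lambda>P :: nat set set. \<Prod>C\<in>P. gg \<alpha> \<beta> 1 (card C))"
  have "(\<Sum>P\<in>{P\<in>Part n. \<forall>B\<in>P. 2 \<le> card B}. c P * tau_part (Ic P0) (muc \<alpha> \<beta> \<gamma>) P (Vc P0 1)) = 0"
    by (rule H[rule_format]) (use fin pos s1 tg in auto)
  also have "(\<Sum>P\<in>{P\<in>Part n. \<forall>B\<in>P. 2 \<le> card B}. c P * tau_part (Ic P0) (muc \<alpha> \<beta> \<gamma>) P (Vc P0 1))
     = (\<Sum>P\<in>{P\<in>Part n. \<forall>B\<in>P. 2 \<le> card B}. c P * (if refines P P0 then w P else 0))"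
  proof (rule sum.cong[OF refl])
    fix P assume "P \<in> {P\<in>Part n. \<forall>B\<in>P. 2 \<le> card B}"
    then have P: "P \<in> Part n" by simp
    show "c P * tau_part (Ic P0) (muc \<alpha> \<beta> \<gamma>) P (Vc P0 1) = c P * (if refines P P0 then w P else 0)"
      unfolding w_def by (simp only: tau_part_c[OF P0 P])
  qed
  finally have s0: "(\<Sum>P\<in>{P\<in>Part n. \<forall>B\<in>P. 2 \<le> card B}. c P * (if refines P P0 then w P else 0)) = 0" .
  have "w P0 \<noteq> 0"
  proof -
    have "gg \<alpha> \<beta> 1 (card C) \<noteq> 0" if C: "C \<in> P0" for C
      using gg_nz[OF ap(1) ap(4) big[OF C]] .
    then show ?thesis unfolding w_def using part_props(1)[OF P0] by (simp add: prod_zero_iff)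
  qed
  then show "\<exists>w. w P0 \<noteq> 0 \<and> (\<Sum>P\<in>{P\<in>Part n. \<forall>B\<in>P. 2 \<le> card B}. c P * (if refines P P0 then w P else 0)) = 0"
    using s0 by blast
qed


theorem lemma4p2:
  fixes n :: nat
  shows
  "(\<forall>a :: nat set set \<Rightarrow> real \<Rightarrow> real.
      (\<forall>(I :: nat set) (\<mu> :: nat \<Rightarrow> real) (V :: nat \<Rightarrow> nat \<Rightarrow> real).
         finite I \<longrightarrow> I \<noteq> {} \<longrightarrow> (\<forall>i\<in>I. 0 < \<mu> i) \<longrightarrow>
         (\<Sum>P\<in>Part n. a P (snorm I \<mu>) * tau_part I \<mu> P V) = 0)
      \<longrightarrow> (\<forall>P\<in>Part n. \<forall>t>0. a P t = 0))
   \<and>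
   (\<forall>c :: nat set set \<Rightarrow> real.
      (\<forall>(I :: nat set) (\<mu> :: nat \<Rightarrow> real) (V :: nat \<Rightarrow> nat \<Rightarrow> real).
         finite I \<longrightarrow> (\<forall>i\<in>I. 0 < \<mu> i) \<longrightarrow> (\<Sum>i\<in>I. \<mu> i) = 1 \<longrightarrow>
         (\<forall>k\<in>{1..n}. (\<Sum>i\<in>I. V k i) = 0) \<longrightarrow>
         (\<Sum>P\<in>{P\<in>Part n. \<forall>B\<in>P. 2 \<le> card B}. c P * tau_part I \<mu> P V) = 0)
      \<longrightarrow> (\<forall>P\<in>{P\<in>Part n. \<forall>B\<in>P. 2 \<le> card B}. c P = 0))"
  proof (intro conjI allI impI)
  fix a :: "nat set set \<Rightarrow> real \<Rightarrow> real"
  assume h: "\<forall>(I :: nat set) (\<mu> :: nat \<Rightarrow> real) (V :: nat \<Rightarrow> nat \<Rightarrow> real).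
         finite I \<longrightarrow> I \<noteq> {} \<longrightarrow> (\<forall>i\<in>I. 0 < \<mu> i) \<longrightarrow>
         (\<Sum>P\<in>Part n. a P (snorm I \<mu>) * tau_part I \<mu> P V) = 0"
  show "\<forall>P\<in>Part n. \<forall>t>0. a P t = 0" by (rule part_a[OF h])
next
  fix c :: "nat set set \<Rightarrow> real"
  assume h: "\<forall>(I :: nat set) (\<mu> :: nat \<Rightarrow> real) (V :: nat \<Rightarrow> nat \<Rightarrow> real).
         finite I \<longrightarrow> (\<forall>i\<in>I. 0 < \<mu> i) \<longrightarrow> (\<Sum>i\<in>I. \<mu> i) = 1 \<longrightarrow>
         (\<forall>k\<in>{1..n}. (\<Sum>i\<in>I. V k i) = 0) \<longrightarrow>
         (\<Sum>P\<in>{P\<in>Part n. \<forall>B\<in>P. 2 \<le> card B}. c P * tau_part I \<mu> P V) = 0"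
  show "\<forall>P\<in>{P\<in>Part n. \<forall>B\<in>P. 2 \<le> card B}. c P = 0" by (rule part_b[OF h])
qed

end
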